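(* $(\textbf{W}, \nabla_{\sqcup\!\sqcup}, \iota_{\sqcup\!\sqcup}, \Delta_\odot, \epsilon_\odot)$ is a graded bialgebra, but not a Hopf algebra.
   Context: Let $\Bbbk$ be a field. A word is a finite sequence of positive integers; $\ell(w)$ is its length and $\max(w)$ its largest letter ($\max(\emptyset)=0$). Let $\textsf{Shuffle}$ be the $\Bbbk$-vector space with basis all words, with the shuffle product $u\sqcup\!\sqcup v$ (sum over all interleavings of $u$ and $v$, with multiplicity) and deconcatenation coproduct. For a word $w=w_1\cdots w_m$ with $\max(w)\le n\in\mathbb{N}$, let $[w,n]$ be the linear endomorphism of $\textsf{Shuffle}$ sending a word $v$ of length $n$ to $v_{w_1}v_{w_2}\cdots v_{w_m}$ and all other words to $0$. Let $\textbf{W}$ be the span of all such $[w,n]$ (these form a basis), graded by declaring $[w,n]$ to have degree $\ell(w)$. For a word $w$ let $w\uparrow m$ be the word obtained by adding $m$ to each letter. Define $\nabla_{\sqcup\!\sqcup}([v,m]\otimes[w,n]) = [v\sqcup\!\sqcup (w\uparrow m), m+n]$ (extended linearly in the first slot), $\iota_{\sqcup\!\sqcup}(1)=[\emptyset,0]$, $\epsilon_\odot([w,n])=1$ if $w=\emptyset$ and $0$ otherwise, and $\Delta_\odot([w,n])=\sum_{i=0}^m [w_1\cdots w_i,n]\otimes[w_{i+1}\cdots w_m,n]$ for $w=w_1\cdots w_m$. *)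

theory Defs
  imports Main "HOL-Library.Poly_Mapping" "HOL-Library.Multiset"
begin

(* A vector space with basis indexed by the type 'b over the field 'k is modelled as
  the finitely supported functions 'b \<Rightarrow>_0 'k.  The tensor product of two such spaces
  is the free space on the product basis, ('b \<times> 'c) \<Rightarrow>_0 'k.  A linear map out of a free
  space is the same thing as an arbitrary assignment of values to basis vectors. *)

definition vsmult :: "'k::field \<Rightarrow> ('b \<Rightarrow>\<^sub>0 'k) \<Rightarrow> ('b \<Rightarrow>\<^sub>0 'k)" where
  "vsmult c x = Poly_Mapping.map (\<lambda>a. c * a) x"

definition basis_vec :: "'b \<Rightarrow> ('b \<Rightarrow>\<^sub>0 'k::field)" where
  "basis_vec b = Poly_Mapping.single b 1"

definition lin_ext :: "('b \<Rightarrow> ('c \<Rightarrow>\<^sub>0 'k::field)) \<Rightarrow> ('b \<Rightarrow>\<^sub>0 'k) \<Rightarrow> ('c \<Rightarrow>\<^sub>0 'k)" where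
  "lin_ext F x = (\<Sum>b\<in>Poly_Mapping.keys x. vsmult (Poly_Mapping.lookup x b) (F b))"

definition lin_fun :: "('b \<Rightarrow> 'k::field) \<Rightarrow> ('b \<Rightarrow>\<^sub>0 'k) \<Rightarrow> 'k" where
  "lin_fun f x = (\<Sum>b\<in>Poly_Mapping.keys x. Poly_Mapping.lookup x b * f b)"

definition tens :: "('b \<Rightarrow>\<^sub>0 'k::field) \<Rightarrow> ('c \<Rightarrow>\<^sub>0 'k) \<Rightarrow> (('b \<times> 'c) \<Rightarrow>\<^sub>0 'k)" where
  "tens x y = (\<Sum>a\<in>Poly_Mapping.keys x. \<Sum>b\<in>Poly_Mapping.keys y. Poly_Mapping.single (a, b) (Poly_Mapping.lookup x a * Poly_Mapping.lookup y b))"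

definition tens_map :: "('b \<Rightarrow> ('d \<Rightarrow>\<^sub>0 'k::field)) \<Rightarrow> ('c \<Rightarrow> ('e \<Rightarrow>\<^sub>0 'k))
     \<Rightarrow> (('b \<times> 'c) \<Rightarrow>\<^sub>0 'k) \<Rightarrow> (('d \<times> 'e) \<Rightarrow>\<^sub>0 'k)" where
  "tens_map F G = lin_ext (\<lambda>(a, b). tens (F a) (G b))"

(* Data: a product on basis vectors mb (extended bilinearly; this is the linear map
  W\<otimes>W \<rightarrow> W), a unit element u (the image of 1 under the unit map k \<rightarrow> W), a coproduct
  cb on basis vectors (extended linearly to W \<rightarrow> W\<otimes>W), and a counit eb on basis vectors
  (extended linearly to W \<rightarrow> k). *)

definition mult_lin :: "('b \<Rightarrow> 'b \<Rightarrow> ('b \<Rightarrow>\<^sub>0 'k::field)) \<Rightarrow> (('b \<times> 'b) \<Rightarrow>\<^sub>0 'k) \<Rightarrow> ('b \<Rightarrow>\<^sub>0 'k)" where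
  "mult_lin mb = lin_ext (\<lambda>(a, b). mb a b)"

definition mult :: "('b \<Rightarrow> 'b \<Rightarrow> ('b \<Rightarrow>\<^sub>0 'k::field)) \<Rightarrow> ('b \<Rightarrow>\<^sub>0 'k) \<Rightarrow> ('b \<Rightarrow>\<^sub>0 'k) \<Rightarrow> ('b \<Rightarrow>\<^sub>0 'k)" where
  "mult mb x y = mult_lin mb (tens x y)"

definition tens_prod_basis :: "('b \<Rightarrow> 'b \<Rightarrow> ('b \<Rightarrow>\<^sub>0 'k::field))
     \<Rightarrow> ('b \<times> 'b) \<Rightarrow> ('b \<times> 'b) \<Rightarrow> (('b \<times> 'b) \<Rightarrow>\<^sub>0 'k)" where
  "tens_prod_basis mb p q = tens (mb (fst p) (fst q)) (mb (snd p) (snd q))"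

definition bialgebra :: "('b \<Rightarrow> 'b \<Rightarrow> ('b \<Rightarrow>\<^sub>0 'k::field)) \<Rightarrow> ('b \<Rightarrow>\<^sub>0 'k)
     \<Rightarrow> ('b \<Rightarrow> (('b \<times> 'b) \<Rightarrow>\<^sub>0 'k)) \<Rightarrow> ('b \<Rightarrow> 'k) \<Rightarrow> bool" where
  "bialgebra mb u cb eb \<longleftrightarrow>
     \<comment> \<open>associativity\<close>
     (\<forall>x y z. mult mb (mult mb x y) z = mult mb x (mult mb y z)) \<and>
     \<comment> \<open>unit\<close>
     (\<forall>x. mult mb u x = x \<and> mult mb x u = x) \<and>
     \<comment> \<open>coassociativity: (\<Delta>\<otimes>id)\<Delta> = (id\<otimes>\<Delta>)\<Delta>, up to the canonical reassociation\<close>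
     (\<forall>x a b c. Poly_Mapping.lookup (tens_map cb basis_vec (lin_ext cb x)) ((a, b), c)
               = Poly_Mapping.lookup (tens_map basis_vec cb (lin_ext cb x)) (a, (b, c))) \<and>
     \<comment> \<open>counit: (\<epsilon>\<otimes>id)\<Delta> = id = (id\<otimes>\<epsilon>)\<Delta>\<close>
     (\<forall>x. lin_ext (\<lambda>(a, b). vsmult (eb a) (basis_vec b)) (lin_ext cb x) = x \<and>
          lin_ext (\<lambda>(a, b). vsmult (eb b) (basis_vec a)) (lin_ext cb x) = x) \<and>
     \<comment> \<open>the coproduct is an algebra morphism\<close>
     (\<forall>x y. lin_ext cb (mult mb x y) = mult (tens_prod_basis mb) (lin_ext cb x) (lin_ext cb y)) \<and>
     lin_ext cb u = tens u u \<and>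
     \<comment> \<open>the counit is an algebra morphism\<close>
     (\<forall>x y. lin_fun eb (mult mb x y) = lin_fun eb x * lin_fun eb y) \<and>
     lin_fun eb u = 1"

(* Grading W = \<Oplus>_d W_d where W_d is spanned by the basis vectors of degree d. *)
definition graded_bialgebra :: "('b \<Rightarrow> nat) \<Rightarrow> ('b \<Rightarrow> 'b \<Rightarrow> ('b \<Rightarrow>\<^sub>0 'k::field)) \<Rightarrow> ('b \<Rightarrow>\<^sub>0 'k)
     \<Rightarrow> ('b \<Rightarrow> (('b \<times> 'b) \<Rightarrow>\<^sub>0 'k)) \<Rightarrow> ('b \<Rightarrow> 'k) \<Rightarrow> bool" where
  "graded_bialgebra deg mb u cb eb \<longleftrightarrow>
     bialgebra mb u cb eb \<and>
     (\<forall>a b. \<forall>c\<in>Poly_Mapping.keys (mb a b). deg c = deg a + deg b) \<and>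
     (\<forall>c\<in>Poly_Mapping.keys u. deg c = 0) \<and>
     (\<forall>a. \<forall>(p, q)\<in>Poly_Mapping.keys (cb a). deg p + deg q = deg a) \<and>
     (\<forall>a. eb a \<noteq> 0 \<longrightarrow> deg a = 0)"

(* Hopf algebra: a bialgebra admitting an antipode, i.e. a linear map S : W \<rightarrow> W
  (given by its values on basis vectors) with \<nabla>(S\<otimes>id)\<Delta> = \<iota>\<epsilon> = \<nabla>(id\<otimes>S)\<Delta>. *)
definition hopf_algebra :: "('b \<Rightarrow> 'b \<Rightarrow> ('b \<Rightarrow>\<^sub>0 'k::field)) \<Rightarrow> ('b \<Rightarrow>\<^sub>0 'k)
     \<Rightarrow> ('b \<Rightarrow> (('b \<times> 'b) \<Rightarrow>\<^sub>0 'k)) \<Rightarrow> ('b \<Rightarrow> 'k) \<Rightarrow> bool" where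
  "hopf_algebra mb u cb eb \<longleftrightarrow>
     bialgebra mb u cb eb \<and>
     (\<exists>S :: 'b \<Rightarrow> ('b \<Rightarrow>\<^sub>0 'k). \<forall>x.
        mult_lin mb (tens_map S basis_vec (lin_ext cb x)) = vsmult (lin_fun eb x) u \<and>
        mult_lin mb (tens_map basis_vec S (lin_ext cb x)) = vsmult (lin_fun eb x) u)"

(* Words are lists of positive integers.  The basis of W: pairs [w,n] with max(w) \<le> n. *)
typedef wbasis = "{(w :: nat list, n :: nat). \<forall>x\<in>set w. 0 < x \<and> x \<le> n}"
  morphisms rep_wb Abs_wb
  by (rule exI[of _ "([], 0)"]) simp

(* Shuffle product of words, as the multiset of all interleavings (with multiplicity). *)
fun shuffle_ms :: "'a list \<Rightarrow> 'a list \<Rightarrow> 'a list multiset" where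
  "shuffle_ms [] ys = {#ys#}"
| "shuffle_ms xs [] = {#xs#}"
| "shuffle_ms (x # xs) (y # ys) =
     image_mset ((#) x) (shuffle_ms xs (y # ys)) + image_mset ((#) y) (shuffle_ms (x # xs) ys)"

definition word_up :: "nat list \<Rightarrow> nat \<Rightarrow> nat list" where
  "word_up w m = List.map (\<lambda>a. a + m) w"

definition W_deg :: "wbasis \<Rightarrow> nat" where
  "W_deg b = length (fst (rep_wb b))"

definition W_mult_basis :: "wbasis \<Rightarrow> wbasis \<Rightarrow> (wbasis \<Rightarrow>\<^sub>0 'k::field)" where
  "W_mult_basis b1 b2 = (case rep_wb b1 of (v, m) \<Rightarrow> case rep_wb b2 of (w, n) \<Rightarrow>
     sum_mset (image_mset (\<lambda>s. Poly_Mapping.single (Abs_wb (s, m + n)) 1)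
                 (shuffle_ms v (word_up w m))))"

definition W_unit :: "wbasis \<Rightarrow>\<^sub>0 'k::field" where
  "W_unit = Poly_Mapping.single (Abs_wb ([], 0)) 1"

definition W_coprod_basis :: "wbasis \<Rightarrow> ((wbasis \<times> wbasis) \<Rightarrow>\<^sub>0 'k::field)" where
  "W_coprod_basis b = (case rep_wb b of (w, n) \<Rightarrow>
     (\<Sum>i\<in>{0..length w}. Poly_Mapping.single (Abs_wb (take i w, n), Abs_wb (drop i w, n)) 1))"

definition W_counit_basis :: "wbasis \<Rightarrow> 'k::field" where
  "W_counit_basis b = (if fst (rep_wb b) = [] then 1 else 0)"

end

theory Submission
  imports Defs
begin


lemma lookup_vsmult[simp]: "Poly_Mapping.lookup (vsmult c x) b = c * Poly_Mapping.lookup x b"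
  unfolding vsmult_def by transfer (simp add: when_def)

lemma vsmult_add: "vsmult c (x + y) = vsmult c x + vsmult c y"
  by (rule poly_mapping_eqI) (simp add: lookup_add algebra_simps)

lemma vsmult_add2: "vsmult (c + d) x = vsmult c x + vsmult d x"
  by (rule poly_mapping_eqI) (simp add: lookup_add algebra_simps)

lemma vsmult_vsmult[simp]: "vsmult c (vsmult d x) = vsmult (c * d) x"
  by (rule poly_mapping_eqI) (simp add: algebra_simps)

lemma vsmult_0[simp]: "vsmult 0 x = 0" "vsmult c 0 = 0"
  by (rule poly_mapping_eqI, simp)+

lemma vsmult_1[simp]: "vsmult 1 x = x"
  by (rule poly_mapping_eqI, simp)

lemma vsmult_sum: "vsmult c (sum f A) = (\<Sum>a\<in>A. vsmult c (f a))"
  by (induction A rule: infinite_finite_induct) (auto simp: vsmult_add)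

lemma lookup_basis_vec: "Poly_Mapping.lookup (basis_vec b) b' = (if b = b' then 1 else 0)"
  unfolding basis_vec_def by (simp add: lookup_single when_def)

lemma lookup_lin_ext:
  "Poly_Mapping.lookup (lin_ext F x) c = (\<Sum>b\<in>Poly_Mapping.keys x. Poly_Mapping.lookup x b * Poly_Mapping.lookup (F b) c)"
  unfolding lin_ext_def by (simp add: lookup_sum)

lemma lookup_lin_ext_superset:
  assumes "finite S" "Poly_Mapping.keys x \<subseteq> S"
  shows "Poly_Mapping.lookup (lin_ext F x) c = (\<Sum>b\<in>S. Poly_Mapping.lookup x b * Poly_Mapping.lookup (F b) c)"
  unfolding lookup_lin_ext
  by (rule sum.mono_neutral_left) (use assms in \<open>auto simp: in_keys_iff\<close>)

lemma lin_ext_add: "lin_ext F (x + y) = lin_ext F x + lin_ext F y"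
proof (rule poly_mapping_eqI)
  fix c
  let ?S = "Poly_Mapping.keys x \<union> Poly_Mapping.keys y"
  have "Poly_Mapping.keys (x + y) \<subseteq> ?S" by (rule keys_add)
  then show "Poly_Mapping.lookup (lin_ext F (x + y)) c = Poly_Mapping.lookup (lin_ext F x + lin_ext F y) c"
    by (simp add: lookup_add lookup_lin_ext_superset[of ?S] algebra_simps sum.distrib)
qed

lemma keys_vsmult: "Poly_Mapping.keys (vsmult c x) \<subseteq> Poly_Mapping.keys x"
  by (auto simp: in_keys_iff)

lemma lin_ext_vsmult: "lin_ext F (vsmult c x) = vsmult c (lin_ext F x)"
proof (rule poly_mapping_eqI)
  fix d
  show "Poly_Mapping.lookup (lin_ext F (vsmult c x)) d = Poly_Mapping.lookup (vsmult c (lin_ext F x)) d"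
    apply (subst lookup_lin_ext_superset[OF finite_keys keys_vsmult])
    by (simp add: lookup_lin_ext sum_distrib_left algebra_simps)
qed

lemma lin_ext_basis[simp]: "lin_ext F (basis_vec b) = F b"
  by (rule poly_mapping_eqI) (simp add: lookup_lin_ext basis_vec_def)

lemma lin_ext_zero[simp]: "lin_ext F 0 = 0"
  by (simp add: lin_ext_def)

definition lin :: "(('b \<Rightarrow>\<^sub>0 'k::field) \<Rightarrow> ('c \<Rightarrow>\<^sub>0 'k)) \<Rightarrow> bool" where
  "lin f \<longleftrightarrow> (\<forall>x y. f (x + y) = f x + f y) \<and> (\<forall>c x. f (vsmult c x) = vsmult c (f x))"

lemma lin_lin_ext: "lin (lin_ext F)"
  by (simp add: lin_def lin_ext_add lin_ext_vsmult)

lemma lin_comp: "lin f \<Longrightarrow> lin g \<Longrightarrow> lin (\<lambda>x. f (g x))"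
  by (simp add: lin_def)

lemma lin_zero: "lin f \<Longrightarrow> f 0 = 0"
  unfolding lin_def by (metis add_cancel_right_right add_0_left)

lemma lin_sum: "lin f \<Longrightarrow> f (sum g A) = (\<Sum>a\<in>A. f (g a))"
  by (induction A rule: infinite_finite_induct) (auto simp: lin_zero lin_def)

lemma expand_basis: "x = (\<Sum>b\<in>Poly_Mapping.keys x. vsmult (Poly_Mapping.lookup x b) (basis_vec b))"
proof (rule poly_mapping_eqI)
  fix c
  have "(\<Sum>b\<in>Poly_Mapping.keys x. Poly_Mapping.lookup x b * (if b = c then 1 else 0)) = Poly_Mapping.lookup x c"
  proof -
    have "(\<Sum>b\<in>Poly_Mapping.keys x. Poly_Mapping.lookup x b * (if b = c then 1 else 0))
       = (\<Sum>b\<in>Poly_Mapping.keys x. if b = c then Poly_Mapping.lookup x c else 0)"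
      by (rule sum.cong) auto
    also have "\<dots> = (if c \<in> Poly_Mapping.keys x then Poly_Mapping.lookup x c else 0)"
      by (rule sum.delta[OF finite_keys])
    also have "\<dots> = Poly_Mapping.lookup x c" by (simp add: in_keys_iff)
    finally show ?thesis .
  qed
  then show "Poly_Mapping.lookup x c = Poly_Mapping.lookup (\<Sum>b\<in>Poly_Mapping.keys x. vsmult (Poly_Mapping.lookup x b) (basis_vec b)) c"
    by (simp add: lookup_sum lookup_basis_vec)
qed

lemma lin_principle: "lin f \<Longrightarrow> f x = lin_ext (\<lambda>b. f (basis_vec b)) x"
proof -
  assume f: "lin f"
  have "f x = f (\<Sum>b\<in>Poly_Mapping.keys x. vsmult (Poly_Mapping.lookup x b) (basis_vec b))"
    by (subst expand_basis) rule
  also have "\<dots> = lin_ext (\<lambda>b. f (basis_vec b)) x"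
    using f by (simp add: lin_sum lin_ext_def lin_def)
  finally show ?thesis .
qed

lemma lin_eq:
  assumes "lin f" "lin g" "\<And>b. f (basis_vec b) = g (basis_vec b)"
  shows "f x = g x"
proof -
  have "f x = lin_ext (\<lambda>b. f (basis_vec b)) x" by (rule lin_principle[OF assms(1)])
  also have "\<dots> = lin_ext (\<lambda>b. g (basis_vec b)) x" by (simp only: assms(3))
  also have "\<dots> = g x" by (rule lin_principle[OF assms(2), symmetric])
  finally show ?thesis .
qed

lemma lin_ext_lin_ext: "lin_ext G (lin_ext F x) = lin_ext (\<lambda>b. lin_ext G (F b)) x"
  by (rule lin_eq[of "\<lambda>x. lin_ext G (lin_ext F x)" "lin_ext (\<lambda>b. lin_ext G (F b))"])
     (simp_all add: lin_comp lin_lin_ext)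

lemma lin_fun_as: "lin_fun f x = Poly_Mapping.lookup (lin_ext (\<lambda>b. Poly_Mapping.single () (f b)) x) ()"
  by (simp add: lin_fun_def lookup_lin_ext)

lemma lin_fun_add: "lin_fun f (x + y) = lin_fun f x + lin_fun f y"
  by (simp add: lin_fun_as lin_ext_add lookup_add)

lemma lin_fun_vsmult: "lin_fun f (vsmult c x) = c * lin_fun f x"
  by (simp add: lin_fun_as lin_ext_vsmult)

lemma lin_fun_basis[simp]: "lin_fun f (basis_vec b) = f b"
  by (simp add: lin_fun_as)

definition slin :: "(('b \<Rightarrow>\<^sub>0 'k::field) \<Rightarrow> 'k) \<Rightarrow> bool" where
  "slin f \<longleftrightarrow> (\<forall>x y. f (x + y) = f x + f y) \<and> (\<forall>c x. f (vsmult c x) = c * f x)"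

lemma vsmult_single: "vsmult c (Poly_Mapping.single k v) = Poly_Mapping.single k (c * v)"
  unfolding vsmult_def by simp

lemma slin_eq:
  assumes "slin f" "slin g" "\<And>b. f (basis_vec b) = g (basis_vec b)"
  shows "f x = g x"
proof -
  have "lin (\<lambda>x. Poly_Mapping.single () (f x))" "lin (\<lambda>x. Poly_Mapping.single () (g x))"
    using assms(1,2) unfolding lin_def slin_def by (simp_all add: single_add vsmult_single)
  then have "Poly_Mapping.single () (f x) = Poly_Mapping.single () (g x)"
    by (rule lin_eq[of "\<lambda>x. Poly_Mapping.single () (f x)" "\<lambda>x. Poly_Mapping.single () (g x)"]) (simp_all add: assms(3))
  then have "Poly_Mapping.lookup (Poly_Mapping.single () (f x)) () = Poly_Mapping.lookup (Poly_Mapping.single () (g x)) ()"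
    by (rule arg_cong)
  then show ?thesis by (simp only: lookup_single_eq)
qed

lemma slin_lin_fun: "slin (lin_fun f)"
  by (simp add: slin_def lin_fun_add lin_fun_vsmult)

lemma lookup_tens: "Poly_Mapping.lookup (tens x y) (a, b) = Poly_Mapping.lookup x a * Poly_Mapping.lookup y b"
proof -
  have e: "Poly_Mapping.lookup (Poly_Mapping.single (a', b') v) (a, b) = (if a' = a then (if b' = b then v else 0) else 0)" for a' b' and v :: 'a
    by (simp add: lookup_single when_def)
  have "Poly_Mapping.lookup (tens x y) (a, b) =
     (\<Sum>a'\<in>Poly_Mapping.keys x. if a' = a then (\<Sum>b'\<in>Poly_Mapping.keys y. if b' = b then Poly_Mapping.lookup x a' * Poly_Mapping.lookup y b' else 0) else 0)"
    unfolding tens_def lookup_sum e by (rule sum.cong) auto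
  also have "\<dots> = Poly_Mapping.lookup x a * Poly_Mapping.lookup y b"
    unfolding sum.delta[OF finite_keys]
    by (cases "a \<in> Poly_Mapping.keys x"; cases "b \<in> Poly_Mapping.keys y") (simp_all add: in_keys_iff)
  finally show ?thesis .
qed

lemma lookup_tens': "Poly_Mapping.lookup (tens x y) p = Poly_Mapping.lookup x (fst p) * Poly_Mapping.lookup y (snd p)"
  using lookup_tens[of x y "fst p" "snd p"] by simp

lemma lin_tens1: "lin (\<lambda>x. tens x y)"
  unfolding lin_def by (intro conjI allI poly_mapping_eqI) (simp_all add: lookup_tens' lookup_add algebra_simps)

lemma lin_tens2: "lin (\<lambda>y. tens x y)"
  unfolding lin_def by (intro conjI allI poly_mapping_eqI) (simp_all add: lookup_tens' lookup_add algebra_simps)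

lemma tens_basis: "tens (basis_vec a) (basis_vec b) = basis_vec (a, b)"
  by (rule poly_mapping_eqI) (simp add: lookup_tens' lookup_basis_vec prod_eq_iff)

lemma lin_mult1: "lin (\<lambda>x. mult mb x y)"
  unfolding mult_def mult_lin_def by (rule lin_comp[OF lin_lin_ext lin_tens1])

lemma lin_mult2: "lin (\<lambda>y. mult mb x y)"
  unfolding mult_def mult_lin_def by (rule lin_comp[OF lin_lin_ext lin_tens2])

lemma mult_basis[simp]: "mult mb (basis_vec a) (basis_vec b) = mb a b"
  by (simp add: mult_def mult_lin_def tens_basis)


definition mbind :: "'a multiset \<Rightarrow> ('a \<Rightarrow> 'b multiset) \<Rightarrow> 'b multiset" where
  "mbind M f = sum_mset (image_mset f M)"

lemma mbind_empty[simp]: "mbind {#} f = {#}"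
  by (simp add: mbind_def)
lemma mbind_add_mset[simp]: "mbind (add_mset a M) f = f a + mbind M f"
  by (simp add: mbind_def)
lemma mbind_union[simp]: "mbind (M + N) f = mbind M f + mbind N f"
  by (simp add: mbind_def)
lemma mbind_image[simp]: "mbind (image_mset g M) f = mbind M (\<lambda>x. f (g x))"
  by (simp add: mbind_def image_mset.compositionality comp_def)
lemma image_mbind: "image_mset h (mbind M f) = mbind M (\<lambda>x. image_mset h (f x))"
  by (induction M) auto
lemma mbind_plus_fun: "mbind M (\<lambda>x. f x + g x) = mbind M f + mbind M g"
  by (induction M) auto
lemma mbind_single_fun[simp]: "mbind M (\<lambda>x. {#x#}) = M"
  by (induction M) auto
lemma mbind_empty_fun[simp]: "mbind M (\<lambda>x. {#}) = {#}"
  by (induction M) auto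
lemma mbind_cong: "(\<And>x. x \<in># M \<Longrightarrow> f x = g x) \<Longrightarrow> mbind M f = mbind M g"
  unfolding mbind_def by (metis image_mset_cong)
lemma mbind_assoc: "mbind (mbind M f) g = mbind M (\<lambda>x. mbind (f x) g)"
  by (induction M) auto
lemma mbind_swap: "mbind M (\<lambda>x. mbind N (f x)) = mbind N (\<lambda>y. mbind M (\<lambda>x. f x y))"
  by (induction M) (auto simp: mbind_plus_fun)
lemma set_mbind: "set_mset (mbind M f) = (\<Union>x\<in>set_mset M. set_mset (f x))"
  by (induction M) auto

definition mprod :: "'a multiset \<Rightarrow> 'b multiset \<Rightarrow> ('a \<times> 'b) multiset" where
  "mprod M N = mbind M (\<lambda>a. image_mset (Pair a) N)"

lemma mprod_single[simp]: "mprod {#a#} N = image_mset (Pair a) N"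
  by (simp add: mprod_def)
lemma mprod_single2[simp]: "mprod M {#b#} = image_mset (\<lambda>a. (a, b)) M"
  by (induction M) (auto simp: mprod_def)
lemma mprod_union[simp]: "mprod (M + M') N = mprod M N + mprod M' N"
  by (simp add: mprod_def)
lemma mprod_image1: "mprod (image_mset f M) N = image_mset (apfst f) (mprod M N)"
  by (induction M) (auto simp: mprod_def image_mset.compositionality comp_def)

abbreviation sh where "sh \<equiv> shuffle_ms"

lemma sh_Nil2[simp]: "sh xs [] = {#xs#}"
  by (cases xs) auto

lemma sh_map: "sh (map f xs) (map f ys) = image_mset (map f) (sh xs ys)"
  by (induction xs ys rule: shuffle_ms.induct) (auto simp: image_mset.compositionality comp_def)

lemma sh_length: "s \<in># sh xs ys \<Longrightarrow> length s = length xs + length ys"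
  by (induction xs ys arbitrary: s rule: shuffle_ms.induct) auto

lemma sh_set: "s \<in># sh xs ys \<Longrightarrow> set s = set xs \<union> set ys"
  by (induction xs ys arbitrary: s rule: shuffle_ms.induct) auto

lemma sh_Nil_iff: "[] \<in># sh xs ys \<longleftrightarrow> xs = [] \<and> ys = []"
  by (induction xs ys rule: shuffle_ms.induct) auto

lemma sh_ConsCons: "sh (x # xs) (y # ys) = image_mset ((#) x) (sh xs (y # ys)) + image_mset ((#) y) (sh (x # xs) ys)"
  by simp

declare shuffle_ms.simps(3)[simp del]

lemma mbind_sh_Nil[simp]: "mbind M (sh []) = M"
  by (induction M) auto

lemma L1: "mbind (image_mset ((#) a) M) (\<lambda>s. sh s (z # zs))
   = image_mset ((#) a) (mbind M (\<lambda>s. sh s (z # zs))) + image_mset ((#) z) (mbind (image_mset ((#) a) M) (\<lambda>s. sh s zs))"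
  by (induction M) (auto simp: sh_ConsCons)

lemma L2: "mbind (image_mset ((#) a) N) (\<lambda>t. sh (x # xs) t)
   = image_mset ((#) x) (mbind (image_mset ((#) a) N) (\<lambda>t. sh xs t)) + image_mset ((#) a) (mbind N (\<lambda>t. sh (x # xs) t))"
  by (induction N) (auto simp: sh_ConsCons)

lemma sh_assoc: "mbind (sh xs ys) (\<lambda>s. sh s (zs :: 'a list)) = mbind (sh ys zs) (\<lambda>t. sh xs t)"
proof (induction "length xs + length ys + length zs" arbitrary: xs ys zs rule: less_induct)
  case less
  show ?case
  proof (cases "xs = [] \<or> ys = [] \<or> zs = []")
    case True
    then show ?thesis by auto
  next
    case False
    then obtain x xs' y ys' z zs' where e: "xs = x # xs'" "ys = y # ys'" "zs = z # zs'"
      by (meson list.exhaust)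
    define A where "A = (\<lambda>xs ys (zs :: 'a list). mbind (sh xs ys) (\<lambda>s. sh s zs))"
    define B where "B = (\<lambda>xs ys (zs :: 'a list). mbind (sh ys zs) (\<lambda>t. sh xs t))"
    have IH1: "A xs' (y # ys') (z # zs') = B xs' (y # ys') (z # zs')"
      unfolding A_def B_def by (rule less) (simp add: e)
    have IH2: "A (x # xs') ys' (z # zs') = B (x # xs') ys' (z # zs')"
      unfolding A_def B_def by (rule less) (simp add: e)
    have IH3: "A (x # xs') (y # ys') zs' = B (x # xs') (y # ys') zs'"
      unfolding A_def B_def by (rule less) (simp add: e)
    have a: "A (x # xs') (y # ys') (z # zs') = image_mset ((#) x) (A xs' (y # ys') (z # zs'))
       + image_mset ((#) y) (A (x # xs') ys' (z # zs')) + image_mset ((#) z) (A (x # xs') (y # ys') zs')"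
      unfolding A_def sh_ConsCons[of x xs' y ys'] mbind_union L1
      by (simp add: add_ac)
    have b: "B (x # xs') (y # ys') (z # zs') = image_mset ((#) x) (B xs' (y # ys') (z # zs'))
       + image_mset ((#) y) (B (x # xs') ys' (z # zs')) + image_mset ((#) z) (B (x # xs') (y # ys') zs')"
      unfolding B_def sh_ConsCons[of y ys' z zs'] mbind_union L2
      by (simp add: add_ac)
    have "A xs ys zs = B xs ys zs"
      unfolding e a b IH1 IH2 IH3 ..
    then show ?thesis unfolding A_def B_def .
  qed
qed

definition dec :: "'a list \<Rightarrow> ('a list \<times> 'a list) multiset" where
  "dec w = mset (map (\<lambda>i. (take i w, drop i w)) [0..<Suc (length w)])"

lemma dec_Nil[simp]: "dec [] = {#([], [])#}"
  by (simp add: dec_def)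

lemma dec_Cons[simp]: "dec (a # s) = add_mset ([], a # s) (image_mset (apfst ((#) a)) (dec s))"
proof -
  have e: "[0..<Suc (Suc (length s))] = 0 # map Suc [0..<Suc (length s)]"
  proof -
    have m: "map Suc [0..<Suc (length s)] = [Suc 0..<Suc (Suc (length s))]" by (rule map_Suc_upt)
    have c: "[0..<Suc (Suc (length s))] = 0 # [Suc 0..<Suc (Suc (length s))]" by (rule upt_conv_Cons) simp
    show ?thesis unfolding m by (rule c)
  qed
  show ?thesis unfolding dec_def length_Cons e list.map mset.simps map_map
    by (simp del: upt_Suc add: comp_def mset_map image_mset.compositionality)
qed

declare dec_def[simp del]

lemma dec_map: "dec (map f w) = image_mset (map_prod (map f) (map f)) (dec w)"
  by (induction w) (auto simp: image_mset.compositionality comp_def apfst_def map_prod_def split_def)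

lemma dec_append: "P \<in># dec w \<Longrightarrow> fst P @ snd P = w"
  by (induction w arbitrary: P) auto

lemma dec_filter_fst: "filter_mset (\<lambda>P. fst P = []) (dec w) = {#([], w)#}"
  by (induction w) (auto simp: filter_mset_image_mset apfst_def map_prod_def split_def)

lemma dec_filter_snd: "filter_mset (\<lambda>P. snd P = []) (dec w) = {#(w, [])#}"
proof (induction w)
  case Nil then show ?case by simp
next
  case (Cons a w)
  have "filter_mset (\<lambda>P. snd P = []) (image_mset (apfst ((#) a)) (dec w))
      = image_mset (apfst ((#) a)) (filter_mset (\<lambda>P. snd P = []) (dec w))"
    by (simp add: filter_mset_image_mset comp_def apfst_def map_prod_def split_def)
  then show ?case using Cons by simp
qed

definition rassoc :: "('a \<times> 'b) \<times> 'c \<Rightarrow> 'a \<times> ('b \<times> 'c)" where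
  "rassoc X = (fst (fst X), (snd (fst X), snd X))"

lemma dec_coassoc_aux:
  "mbind M (\<lambda>P. image_mset (\<lambda>Q. (Q, snd P)) (dec (a # fst P)))
     = image_mset (\<lambda>P. (([], a # fst P), snd P)) M
       + image_mset (apfst (apfst ((#) a))) (mbind M (\<lambda>P. image_mset (\<lambda>Q. (Q, snd P)) (dec (fst P))))"
  by (induction M) (auto simp: image_mbind image_mset.compositionality comp_def apfst_def map_prod_def split_def)

lemma dec_coassoc:
  "image_mset rassoc (mbind (dec w) (\<lambda>P. image_mset (\<lambda>Q. (Q, snd P)) (dec (fst P))))
   = mbind (dec w) (\<lambda>P. image_mset (\<lambda>Q. (fst P, Q)) (dec (snd P)))"
proof (induction w)
  case Nil then show ?case by (simp add: rassoc_def)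
next
  case (Cons a w)
  have r: "image_mset rassoc (image_mset (apfst (apfst ((#) a))) X) = image_mset (apfst ((#) a)) (image_mset rassoc X)" for X :: "(('a list \<times> 'a list) \<times> 'a list) multiset"
    by (simp add: image_mset.compositionality comp_def rassoc_def apfst_def map_prod_def split_def)
  have r2: "mbind (image_mset (apfst ((#) a)) M) (\<lambda>P. image_mset (\<lambda>Q. (fst P, Q)) (dec (snd P)))
     = image_mset (apfst ((#) a)) (mbind M (\<lambda>P. image_mset (\<lambda>Q. (fst P, Q)) (dec (snd P))))" for M :: "('a list \<times> 'a list) multiset"
    by (induction M) (auto simp: image_mset.compositionality comp_def apfst_def map_prod_def split_def)
  define F where "F = (\<lambda>P::'a list \<times> 'a list. image_mset (\<lambda>Q. (Q, snd P)) (dec (fst P)))"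
  define G where "G = (\<lambda>P::'a list \<times> 'a list. image_mset (\<lambda>Q. (fst P, Q)) (dec (snd P)))"
  have "mbind (dec (a # w)) F = F ([], a # w) + mbind (dec w) (\<lambda>P. F (apfst ((#) a) P))"
    by simp
  also have "mbind (dec w) (\<lambda>P. F (apfst ((#) a) P)) = mbind (dec w) (\<lambda>P. image_mset (\<lambda>Q. (Q, snd P)) (dec (a # fst P)))"
    by (simp add: F_def apfst_def map_prod_def split_def)
  also have "\<dots> = image_mset (\<lambda>P. (([], a # fst P), snd P)) (dec w)
       + image_mset (apfst (apfst ((#) a))) (mbind (dec w) F)"
    unfolding dec_coassoc_aux F_def ..
  finally have L0: "mbind (dec (a # w)) F = F ([], a # w) + (image_mset (\<lambda>P. (([], a # fst P), snd P)) (dec w)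
       + image_mset (apfst (apfst ((#) a))) (mbind (dec w) F))" .
  have IH: "image_mset rassoc (mbind (dec w) F) = mbind (dec w) G"
    using Cons unfolding F_def G_def .
  have t1: "image_mset rassoc (F ([], a # w)) = {#([], [], a # w)#}"
    by (simp add: F_def rassoc_def)
  have t2: "image_mset rassoc (image_mset (\<lambda>P. (([], a # fst P), snd P)) (dec w)) = image_mset (\<lambda>P. ([], a # fst P, snd P)) (dec w)"
    by (simp add: image_mset.compositionality comp_def rassoc_def)
  have L: "image_mset rassoc (mbind (dec (a # w)) F) = {#([], [], a # w)#}
       + image_mset (\<lambda>P. ([], a # fst P, snd P)) (dec w) + image_mset (apfst ((#) a)) (mbind (dec w) G)"
    unfolding L0 image_mset_union r IH t1 t2 add.assoc ..
  have "mbind (dec (a # w)) G = G ([], a # w) + mbind (dec w) (\<lambda>P. G (apfst ((#) a) P))"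
    by simp
  also have "mbind (dec w) (\<lambda>P. G (apfst ((#) a) P)) = mbind (image_mset (apfst ((#) a)) (dec w)) G"
    by simp
  also have "\<dots> = image_mset (apfst ((#) a)) (mbind (dec w) G)"
    unfolding G_def r2 ..
  finally have R: "mbind (dec (a # w)) G = {#([], [], a # w)#}
       + image_mset (\<lambda>P. ([], a # fst P, snd P)) (dec w) + image_mset (apfst ((#) a)) (mbind (dec w) G)"
    by (simp add: G_def image_mset.compositionality comp_def apfst_def map_prod_def split_def add_ac)
  show ?case using L R unfolding F_def G_def by simp
qed

definition H :: "'a list \<times> 'a list \<Rightarrow> 'a list \<times> 'a list \<Rightarrow> ('a list \<times> 'a list) multiset" where
  "H P Q = mprod (sh (fst P) (fst Q)) (sh (snd P) (snd Q))"

lemma LD: "mbind (image_mset ((#) a) M) dec = image_mset (\<lambda>s. ([], a # s)) M + image_mset (apfst ((#) a)) (mbind M dec)"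
  by (induction M) auto

lemma H_Nil1: "H ([], q) Q = image_mset (Pair (fst Q)) (sh q (snd Q))"
  by (simp add: H_def)
lemma H_Nil2: "H P ([], q') = image_mset (Pair (fst P)) (sh (snd P) q')"
  by (simp add: H_def)
lemma H_apfst_apfst: "H (apfst ((#) x) P) (apfst ((#) y) Q)
   = image_mset (apfst ((#) x)) (H P (apfst ((#) y) Q)) + image_mset (apfst ((#) y)) (H (apfst ((#) x) P) Q)"
  by (simp add: H_def apfst_def map_prod_def split_def sh_ConsCons mprod_image1)

lemma dec_sh: "mbind (sh v w) dec = mbind (dec v) (\<lambda>P. mbind (dec w) (H P))"
proof (induction v w rule: shuffle_ms.induct)
  case (1 ys)
  then show ?case by (simp add: H_def)
next
  case (2 x xs)
  then show ?case by (simp add: H_def)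
next
  case (3 x xs y ys)
  define R where "R = (\<lambda>v w :: 'a list. mbind (dec v) (\<lambda>P. mbind (dec w) (H P)))"
  have IH1: "mbind (sh xs (y # ys)) dec = R xs (y # ys)" using 3(1) unfolding R_def .
  have IH2: "mbind (sh (x # xs) ys) dec = R (x # xs) ys" using 3(2) unfolding R_def .
  have "mbind (sh (x # xs) (y # ys)) dec =
      (image_mset (\<lambda>s. ([], x # s)) (sh xs (y # ys)) + image_mset (\<lambda>s. ([], y # s)) (sh (x # xs) ys))
      + image_mset (apfst ((#) x)) (R xs (y # ys)) + image_mset (apfst ((#) y)) (R (x # xs) ys)"
    unfolding sh_ConsCons mbind_union LD IH1 IH2 by (simp add: add_ac)
  also have "image_mset (\<lambda>s. ([], x # s)) (sh xs (y # ys)) + image_mset (\<lambda>s. ([], y # s)) (sh (x # xs) ys)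
      = H ([], x # xs) ([], y # ys)"
    by (simp add: H_Nil1 sh_ConsCons image_mset.compositionality comp_def)
  also have "R xs (y # ys) = mbind (dec xs) (\<lambda>P. H P ([], y # ys))
      + mbind (dec xs) (\<lambda>P. mbind (dec ys) (\<lambda>Q. H P (apfst ((#) y) Q)))"
    unfolding R_def by (simp add: mbind_plus_fun)
  also have "R (x # xs) ys = mbind (dec ys) (\<lambda>Q. H ([], x # xs) Q)
      + mbind (dec xs) (\<lambda>P. mbind (dec ys) (\<lambda>Q. H (apfst ((#) x) P) Q))"
    unfolding R_def by simp
  also have "R (x # xs) (y # ys) = H ([], x # xs) ([], y # ys)
      + mbind (dec ys) (\<lambda>Q. H ([], x # xs) (apfst ((#) y) Q))
      + mbind (dec xs) (\<lambda>P. H (apfst ((#) x) P) ([], y # ys))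
      + mbind (dec xs) (\<lambda>P. mbind (dec ys) (\<lambda>Q. H (apfst ((#) x) P) (apfst ((#) y) Q)))"
    unfolding R_def by (simp add: mbind_plus_fun add_ac)
  moreover have "mbind (dec ys) (\<lambda>Q. H ([], x # xs) (apfst ((#) y) Q))
      = image_mset (apfst ((#) y)) (mbind (dec ys) (\<lambda>Q. H ([], x # xs) Q))"
    unfolding image_mbind by (rule mbind_cong) (simp add: H_Nil1 image_mset.compositionality comp_def apfst_def map_prod_def split_def)
  moreover have "mbind (dec xs) (\<lambda>P. H (apfst ((#) x) P) ([], y # ys))
      = image_mset (apfst ((#) x)) (mbind (dec xs) (\<lambda>P. H P ([], y # ys)))"
    unfolding image_mbind by (rule mbind_cong) (simp add: H_Nil2 image_mset.compositionality comp_def apfst_def map_prod_def split_def)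
  moreover have "mbind (dec xs) (\<lambda>P. mbind (dec ys) (\<lambda>Q. H (apfst ((#) x) P) (apfst ((#) y) Q)))
      = image_mset (apfst ((#) x)) (mbind (dec xs) (\<lambda>P. mbind (dec ys) (\<lambda>Q. H P (apfst ((#) y) Q))))
      + image_mset (apfst ((#) y)) (mbind (dec xs) (\<lambda>P. mbind (dec ys) (\<lambda>Q. H (apfst ((#) x) P) Q)))"
    unfolding H_apfst_apfst mbind_plus_fun image_mbind ..
  ultimately have "mbind (sh (x # xs) (y # ys)) dec = R (x # xs) (y # ys)"
    by (simp add: image_mset_union add_ac)
  then show ?case unfolding R_def .
qed


definition vec :: "'b multiset \<Rightarrow> ('b \<Rightarrow>\<^sub>0 'k::field)" where
  "vec M = sum_mset (image_mset basis_vec M)"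

lemma vec_empty[simp]: "vec {#} = 0" by (simp add: vec_def)
lemma vec_add_mset[simp]: "vec (add_mset a M) = basis_vec a + vec M" by (simp add: vec_def)
lemma vec_union[simp]: "vec (M + N) = vec M + vec N" by (simp add: vec_def)
lemma vec_single: "vec {#a#} = basis_vec a" by simp

lemma lookup_vec: "Poly_Mapping.lookup (vec M :: 'b \<Rightarrow>\<^sub>0 'k::field) k = of_nat (count M k)"
  by (induction M) (auto simp: lookup_add lookup_basis_vec)

lemma keys_vec: "Poly_Mapping.keys (vec M :: 'b \<Rightarrow>\<^sub>0 'k::field) \<subseteq> set_mset M"
proof
  fix x assume "x \<in> Poly_Mapping.keys (vec M :: 'b \<Rightarrow>\<^sub>0 'k::field)"
  then have "(of_nat (count M x) :: 'k) \<noteq> 0" by (simp add: in_keys_iff lookup_vec)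
  then have "count M x \<noteq> 0" by (metis of_nat_0)
  then show "x \<in># M" by (simp add: count_eq_zero_iff[symmetric] del: count_eq_zero_iff)
qed

lemma lin_sum_mset: "lin f \<Longrightarrow> f (sum_mset (image_mset g M)) = sum_mset (image_mset (\<lambda>x. f (g x)) M)"
  by (induction M) (auto simp: lin_zero lin_def)

lemma lin_ext_vec: "lin_ext F (vec M) = sum_mset (image_mset F M)"
  unfolding vec_def by (simp add: lin_sum_mset[OF lin_lin_ext])

lemma lin_fun_vec: "lin_fun f (vec M) = sum_mset (image_mset f M)"
proof (induction M)
  case empty show ?case by (simp add: lin_fun_def)
next
  case (add x M) then show ?case by (simp add: lin_fun_add)
qed

lemma sum_vec: "sum_mset (image_mset (\<lambda>x. vec (G x)) M) = vec (mbind M G)"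
  by (induction M) auto

lemma tens_vec: "tens (vec M) (vec N) = vec (mprod M N)"
proof -
  have "tens (vec M) (vec N) = sum_mset (image_mset (\<lambda>a. tens (basis_vec a) (vec N)) M)"
    unfolding vec_def[of M] by (rule lin_sum_mset[OF lin_tens1])
  also have "\<dots> = sum_mset (image_mset (\<lambda>a. sum_mset (image_mset (\<lambda>b. tens (basis_vec a) (basis_vec b)) N)) M)"
    unfolding vec_def[of N] by (simp add: lin_sum_mset[OF lin_tens2])
  also have "\<dots> = sum_mset (image_mset (\<lambda>a. vec (image_mset (Pair a) N)) M)"
    by (simp add: tens_basis vec_def image_mset.compositionality comp_def)
  also have "\<dots> = vec (mprod M N)"
    unfolding sum_vec mprod_def ..
  finally show ?thesis .
qed

lemma mult_vec: "mult mb (vec M) (vec N) = sum_mset (image_mset (\<lambda>P. mb (fst P) (snd P)) (mprod M N))"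
  unfolding mult_def mult_lin_def tens_vec lin_ext_vec by (simp add: split_def)


definition valid :: "nat \<Rightarrow> nat list \<Rightarrow> bool" where
  "valid n w \<longleftrightarrow> (\<forall>x\<in>set w. 0 < x \<and> x \<le> n)"

lemma rep_Abs: "valid n w \<Longrightarrow> rep_wb (Abs_wb (w, n)) = (w, n)"
  by (rule Abs_wb_inverse) (simp add: valid_def)

lemma wb_cases: obtains w n where "b = Abs_wb (w, n)" "valid n w"
proof -
  obtain w n where r: "rep_wb b = (w, n)" by (cases "rep_wb b")
  have "valid n w" using rep_wb[of b] r by (simp add: valid_def)
  moreover have "b = Abs_wb (w, n)" using r by (metis rep_wb_inverse)
  ultimately show ?thesis using that by blast
qed

lemma word_up_map: "word_up w m = map (\<lambda>a. a + m) w"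
  by (simp add: word_up_def)

lemma word_up_0[simp]: "word_up w 0 = w"
  by (simp add: word_up_def)

lemma word_up_Nil[simp]: "word_up [] m = []"
  by (simp add: word_up_def)

lemma word_up_word_up: "word_up (word_up w m) l = word_up w (l + m)"
  by (simp add: word_up_def add_ac)

lemma length_word_up[simp]: "length (word_up w m) = length w"
  by (simp add: word_up_def)

lemma valid_sh: "valid m v \<Longrightarrow> valid n w \<Longrightarrow> s \<in># sh v (word_up w m) \<Longrightarrow> valid (m + n) s"
proof -
  assume v: "valid m v" and w: "valid n w" and s: "s \<in># sh v (word_up w m)"
  have "set s = set v \<union> (\<lambda>a. a + m) ` set w" using sh_set[OF s] by (simp add: word_up_def)
  then show ?thesis using v w unfolding valid_def by force
qed

lemma valid_up: "valid n t \<Longrightarrow> valid (l + n) (word_up t l)"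
  by (auto simp: valid_def word_up_def)

lemma valid_dec: "valid n w \<Longrightarrow> P \<in># dec w \<Longrightarrow> valid n (fst P) \<and> valid n (snd P)"
  by (auto simp: valid_def dest!: dec_append)

definition Ab :: "nat \<Rightarrow> nat list \<Rightarrow> wbasis" where
  "Ab n w = Abs_wb (w, n)"

definition AA :: "nat \<Rightarrow> nat list \<times> nat list \<Rightarrow> wbasis \<times> wbasis" where
  "AA n P = (Abs_wb (fst P, n), Abs_wb (snd P, n))"

lemma mb_Abs:
  assumes "valid m v" "valid n w"
  shows "(W_mult_basis (Abs_wb (v, m)) (Abs_wb (w, n)) :: wbasis \<Rightarrow>\<^sub>0 'k::field)
     = vec (image_mset (Ab (m + n)) (sh v (word_up w m)))"
  unfolding W_mult_basis_def rep_Abs[OF assms(1)] rep_Abs[OF assms(2)]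
  by (simp add: vec_def image_mset.compositionality comp_def basis_vec_def Ab_def)

lemma cb_Abs:
  assumes "valid n w"
  shows "(W_coprod_basis (Abs_wb (w, n)) :: (wbasis \<times> wbasis) \<Rightarrow>\<^sub>0 'k::field)
     = vec (image_mset (AA n) (dec w))"
proof -
  have d: "dec w = image_mset (\<lambda>i. (take i w, drop i w)) (mset_set {0..length w})"
    unfolding dec_def mset_map mset_upt atLeastLessThanSuc_atLeastAtMost ..
  show ?thesis
    unfolding W_coprod_basis_def rep_Abs[OF assms] d
    by (simp add: sum_unfold_sum_mset vec_def image_mset.compositionality comp_def basis_vec_def AA_def)
qed

lemma eb_Abs: "valid n w \<Longrightarrow> W_counit_basis (Abs_wb (w, n)) = (if w = [] then 1 else 0)"
  by (simp add: W_counit_basis_def rep_Abs)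

lemma W_unit_eq: "W_unit = basis_vec (Abs_wb ([], 0))"
  by (simp add: W_unit_def basis_vec_def)

lemma valid_Nil[simp]: "valid n []"
  by (simp add: valid_def)


abbreviation WM :: "wbasis \<Rightarrow> wbasis \<Rightarrow> (wbasis \<Rightarrow>\<^sub>0 'k::field)" where "WM \<equiv> W_mult_basis"
abbreviation WC :: "wbasis \<Rightarrow> ((wbasis \<times> wbasis) \<Rightarrow>\<^sub>0 'k::field)" where "WC \<equiv> W_coprod_basis"

lemma sum_mset_cong: "(\<And>x. x \<in># M \<Longrightarrow> f x = g x) \<Longrightarrow> sum_mset (image_mset f M) = sum_mset (image_mset g M)"
  by (metis image_mset_cong)

lemma assoc_basis:
  "mult (WM :: _ \<Rightarrow> _ \<Rightarrow> (_ \<Rightarrow>\<^sub>0 'k::field)) (WM a b) (basis_vec c) = mult WM (basis_vec a) (WM b c)"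
proof -
  obtain u l where a: "a = Abs_wb (u, l)" "valid l u" by (rule wb_cases)
  obtain v m where b: "b = Abs_wb (v, m)" "valid m v" by (rule wb_cases)
  obtain w n where c: "c = Abs_wb (w, n)" "valid n w" by (rule wb_cases)
  have "mult (WM :: _ \<Rightarrow> _ \<Rightarrow> (_ \<Rightarrow>\<^sub>0 'k)) (WM a b) (basis_vec c)
      = mult WM (vec (image_mset (Ab (l + m)) (sh u (word_up v l)))) (vec {#c#})"
    by (simp add: a b mb_Abs)
  also have "\<dots> = sum_mset (image_mset (\<lambda>s. WM (Ab (l + m) s) c) (sh u (word_up v l)))"
    unfolding mult_vec by (simp add: image_mset.compositionality comp_def)
  also have "\<dots> = sum_mset (image_mset (\<lambda>s. vec (image_mset (Ab (l + m + n)) (sh s (word_up w (l + m))))) (sh u (word_up v l)))"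
  proof (rule sum_mset_cong)
    fix s assume "s \<in># sh u (word_up v l)"
    then have "valid (l + m) s" using valid_sh a b by blast
    then show "WM (Ab (l + m) s) c = vec (image_mset (Ab (l + m + n)) (sh s (word_up w (l + m))))"
      by (simp add: Ab_def c mb_Abs)
  qed
  also have "\<dots> = vec (image_mset (Ab (l + m + n)) (mbind (sh u (word_up v l)) (\<lambda>s. sh s (word_up w (l + m)))))"
    by (simp add: sum_vec image_mbind)
  finally have L: "mult (WM :: _ \<Rightarrow> _ \<Rightarrow> (_ \<Rightarrow>\<^sub>0 'k)) (WM a b) (basis_vec c) = \<dots>" .
  have "mult (WM :: _ \<Rightarrow> _ \<Rightarrow> (_ \<Rightarrow>\<^sub>0 'k)) (basis_vec a) (WM b c)
      = mult WM (vec {#a#}) (vec (image_mset (Ab (m + n)) (sh v (word_up w m))))"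
    by (simp add: b c mb_Abs)
  also have "\<dots> = sum_mset (image_mset (\<lambda>t. WM a (Ab (m + n) t)) (sh v (word_up w m)))"
    unfolding mult_vec by (simp add: image_mset.compositionality comp_def)
  also have "\<dots> = sum_mset (image_mset (\<lambda>t. vec (image_mset (Ab (l + m + n)) (sh u (word_up t l)))) (sh v (word_up w m)))"
  proof (rule sum_mset_cong)
    fix t assume "t \<in># sh v (word_up w m)"
    then have "valid (m + n) t" using valid_sh b c by blast
    then show "WM a (Ab (m + n) t) = vec (image_mset (Ab (l + m + n)) (sh u (word_up t l)))"
      by (simp add: Ab_def a mb_Abs add.assoc)
  qed
  also have "\<dots> = vec (image_mset (Ab (l + m + n)) (mbind (sh v (word_up w m)) (\<lambda>t. sh u (word_up t l))))"
    by (simp add: sum_vec image_mbind)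
  finally have R: "mult (WM :: _ \<Rightarrow> _ \<Rightarrow> (_ \<Rightarrow>\<^sub>0 'k)) (basis_vec a) (WM b c) = \<dots>" .
  have "mbind (sh v (word_up w m)) (\<lambda>t. sh u (word_up t l))
      = mbind (image_mset (\<lambda>t. word_up t l) (sh v (word_up w m))) (sh u)"
    by simp
  also have "image_mset (\<lambda>t. word_up t l) (sh v (word_up w m)) = sh (word_up v l) (word_up w (l + m))"
  proof -
    have f: "(\<lambda>t. word_up t l) = map (\<lambda>a. a + l)" by (simp add: fun_eq_iff word_up_def)
    have "image_mset (\<lambda>t. word_up t l) (sh v (word_up w m)) = sh (map (\<lambda>a. a + l) v) (map (\<lambda>a. a + l) (word_up w m))"
      unfolding f by (rule sh_map[symmetric])
    also have "\<dots> = sh (word_up v l) (word_up w (l + m))"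
      by (simp add: word_up_map[symmetric] word_up_word_up)
    finally show ?thesis .
  qed
  finally have "mbind (sh v (word_up w m)) (\<lambda>t. sh u (word_up t l)) = mbind (sh u (word_up v l)) (\<lambda>s. sh s (word_up w (l + m)))"
    by (simp add: sh_assoc)
  then show ?thesis using L R by simp
qed

definition e0 :: wbasis where "e0 = Abs_wb ([], 0)"

lemma unit_basis: "WM e0 b = basis_vec b" "WM b e0 = basis_vec b"
proof -
  obtain w n where b: "b = Abs_wb (w, n)" "valid n w" by (rule wb_cases)
  show "WM e0 b = basis_vec b"
    by (simp add: e0_def b mb_Abs Ab_def)
  show "WM b e0 = basis_vec b"
    by (simp add: e0_def b mb_Abs Ab_def)
qed

lemma sum_mprod: "sum_mset (image_mset F (mprod M N)) = sum_mset (image_mset (\<lambda>a. sum_mset (image_mset (\<lambda>b. F (a, b)) N)) M)"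
  by (induction M) (auto simp: mprod_def image_mset.compositionality comp_def)

lemma mprod_image: "mprod (image_mset f M) (image_mset g N) = image_mset (map_prod f g) (mprod M N)"
  by (induction M) (auto simp: mprod_def image_mset.compositionality comp_def)

lemma AA_eq: "AA n = map_prod (Ab n) (Ab n)"
  by (simp add: fun_eq_iff AA_def Ab_def map_prod_def split_def)

lemma coprod_basis:
  "lin_ext (WC :: _ \<Rightarrow> (_ \<Rightarrow>\<^sub>0 'k::field)) (WM a b) = mult (tens_prod_basis WM) (WC a) (WC b)"
proof -
  obtain v m where a: "a = Abs_wb (v, m)" "valid m v" by (rule wb_cases)
  obtain w n where b: "b = Abs_wb (w, n)" "valid n w" by (rule wb_cases)
  define mp where "mp = map_prod (\<lambda>t. word_up t m) (\<lambda>t. word_up t m)"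
  have "lin_ext (WC :: _ \<Rightarrow> (_ \<Rightarrow>\<^sub>0 'k::field)) (WM a b)
     = sum_mset (image_mset (\<lambda>s. WC (Ab (m + n) s)) (sh v (word_up w m)))"
    by (simp add: a b mb_Abs lin_ext_vec image_mset.compositionality comp_def)
  also have "\<dots> = sum_mset (image_mset (\<lambda>s. vec (image_mset (AA (m + n)) (dec s))) (sh v (word_up w m)))"
  proof (rule sum_mset_cong)
    fix s assume "s \<in># sh v (word_up w m)"
    then have "valid (m + n) s" using valid_sh a b by blast
    then show "WC (Ab (m + n) s) = vec (image_mset (AA (m + n)) (dec s))"
      by (simp add: Ab_def cb_Abs)
  qed
  also have "\<dots> = vec (image_mset (AA (m + n)) (mbind (sh v (word_up w m)) dec))"
    by (simp add: sum_vec image_mbind)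
  finally have L: "lin_ext (WC :: _ \<Rightarrow> (_ \<Rightarrow>\<^sub>0 'k::field)) (WM a b) = \<dots>" .
  have "mult (tens_prod_basis WM) (WC a) (WC b :: _ \<Rightarrow>\<^sub>0 'k)
     = mult (tens_prod_basis WM) (vec (image_mset (AA m) (dec v))) (vec (image_mset (AA n) (dec w)))"
    by (simp add: a b cb_Abs)
  also have "\<dots> = sum_mset (image_mset (\<lambda>P. sum_mset (image_mset (\<lambda>Q. tens_prod_basis WM (AA m P) (AA n Q)) (dec w))) (dec v))"
    unfolding mult_vec sum_mprod by (simp add: image_mset.compositionality comp_def)
  also have "\<dots> = sum_mset (image_mset (\<lambda>P. sum_mset (image_mset (\<lambda>Q. vec (image_mset (AA (m + n)) (H P (mp Q)))) (dec w))) (dec v))"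
  proof (rule sum_mset_cong, rule sum_mset_cong)
    fix P Q assume P: "P \<in># dec v" and Q: "Q \<in># dec w"
    have vP: "valid m (fst P)" "valid m (snd P)" using valid_dec[OF a(2) P] by auto
    have vQ: "valid n (fst Q)" "valid n (snd Q)" using valid_dec[OF b(2) Q] by auto
    show "tens_prod_basis WM (AA m P) (AA n Q) = (vec (image_mset (AA (m + n)) (H P (mp Q))) :: _ \<Rightarrow>\<^sub>0 'k)"
      unfolding tens_prod_basis_def
      by (simp add: AA_def mb_Abs vP vQ tens_vec mprod_image H_def mp_def AA_eq[symmetric])
  qed
  also have "\<dots> = vec (image_mset (AA (m + n)) (mbind (dec v) (\<lambda>P. mbind (dec w) (\<lambda>Q. H P (mp Q)))))"
    by (simp add: sum_vec image_mbind)
  also have "(\<lambda>P. mbind (dec w) (\<lambda>Q. H P (mp Q))) = (\<lambda>P. mbind (dec (word_up w m)) (H P))"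
    by (simp add: fun_eq_iff word_up_map dec_map mp_def)
  finally have R: "mult (tens_prod_basis WM) (WC a) (WC b :: _ \<Rightarrow>\<^sub>0 'k) = vec (image_mset (AA (m + n)) (mbind (dec v) (\<lambda>P. mbind (dec (word_up w m)) (H P))))" .
  show ?thesis unfolding L R dec_sh ..
qed

abbreviation WE :: "wbasis \<Rightarrow> 'k::field" where "WE \<equiv> W_counit_basis"

lemma tens_vec_bv: "tens (vec M) (basis_vec x) = (vec (image_mset (\<lambda>y. (y, x)) M) :: _ \<Rightarrow>\<^sub>0 'k::field)"
  using tens_vec[of M "{#x#}"] by simp

lemma tens_bv_vec: "tens (basis_vec x) (vec M) = (vec (image_mset (Pair x) M) :: _ \<Rightarrow>\<^sub>0 'k::field)"
  using tens_vec[of "{#x#}" M] by simp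

lemma tens_map_vec: "tens_map F G (vec M) = sum_mset (image_mset (\<lambda>P. tens (F (fst P)) (G (snd P))) M)"
  by (simp add: tens_map_def lin_ext_vec split_def)

lemma count_image_inj: "inj f \<Longrightarrow> count (image_mset f M) (f x) = count M x"
  by (induction M) (auto simp: inj_eq)

lemma inj_rassoc: "inj rassoc"
  by (rule injI) (simp add: rassoc_def prod_eq_iff)

lemma coassoc_basis:
  "Poly_Mapping.lookup (tens_map (WC :: _ \<Rightarrow> (_ \<Rightarrow>\<^sub>0 'k::field)) basis_vec (WC d)) ((a, b), c)
   = Poly_Mapping.lookup (tens_map basis_vec (WC :: _ \<Rightarrow> (_ \<Rightarrow>\<^sub>0 'k::field)) (WC d)) (a, (b, c))"
proof -
  obtain w n where d: "d = Abs_wb (w, n)" "valid n w" by (rule wb_cases)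
  define LW where "LW = mbind (dec w) (\<lambda>P. image_mset (\<lambda>Q. (Q, snd P)) (dec (fst P)))"
  define RW where "RW = mbind (dec w) (\<lambda>P. image_mset (\<lambda>Q. (fst P, Q)) (dec (snd P)))"
  have "tens_map (WC :: _ \<Rightarrow> (_ \<Rightarrow>\<^sub>0 'k::field)) basis_vec (WC d)
     = sum_mset (image_mset (\<lambda>P. tens (WC (Ab n (fst P))) (basis_vec (Ab n (snd P)))) (dec w))"
    by (simp add: d cb_Abs tens_map_vec image_mset.compositionality comp_def AA_def Ab_def)
  also have "\<dots> = sum_mset (image_mset (\<lambda>P. vec (image_mset (\<lambda>Q. (AA n Q, Ab n (snd P))) (dec (fst P)))) (dec w))"
  proof (rule sum_mset_cong)
    fix P assume P: "P \<in># dec w"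
    have vP: "valid n (fst P)" "valid n (snd P)" using valid_dec[OF d(2) P] by auto
    show "tens (WC (Ab n (fst P))) (basis_vec (Ab n (snd P))) = (vec (image_mset (\<lambda>Q. (AA n Q, Ab n (snd P))) (dec (fst P))) :: _ \<Rightarrow>\<^sub>0 'k)"
      by (simp add: Ab_def cb_Abs vP tens_vec_bv image_mset.compositionality comp_def)
  qed
  also have "\<dots> = vec (image_mset (map_prod (AA n) (Ab n)) LW)"
    by (simp add: sum_vec image_mbind LW_def image_mset.compositionality comp_def)
  finally have L: "tens_map (WC :: _ \<Rightarrow> (_ \<Rightarrow>\<^sub>0 'k::field)) basis_vec (WC d) = vec (image_mset (map_prod (AA n) (Ab n)) LW)" .
  have "tens_map basis_vec (WC :: _ \<Rightarrow> (_ \<Rightarrow>\<^sub>0 'k::field)) (WC d)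
     = sum_mset (image_mset (\<lambda>P. tens (basis_vec (Ab n (fst P))) (WC (Ab n (snd P)))) (dec w))"
    by (simp add: d cb_Abs tens_map_vec image_mset.compositionality comp_def AA_def Ab_def)
  also have "\<dots> = sum_mset (image_mset (\<lambda>P. vec (image_mset (\<lambda>Q. (Ab n (fst P), AA n Q)) (dec (snd P)))) (dec w))"
  proof (rule sum_mset_cong)
    fix P assume P: "P \<in># dec w"
    have vP: "valid n (fst P)" "valid n (snd P)" using valid_dec[OF d(2) P] by auto
    show "tens (basis_vec (Ab n (fst P))) (WC (Ab n (snd P))) = (vec (image_mset (\<lambda>Q. (Ab n (fst P), AA n Q)) (dec (snd P))) :: _ \<Rightarrow>\<^sub>0 'k)"
      by (simp add: Ab_def cb_Abs vP tens_bv_vec image_mset.compositionality comp_def)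
  qed
  also have "\<dots> = vec (image_mset (map_prod (Ab n) (AA n)) RW)"
    by (simp add: sum_vec image_mbind RW_def image_mset.compositionality comp_def)
  also have "RW = image_mset rassoc LW"
    unfolding RW_def LW_def by (rule dec_coassoc[symmetric])
  also have "image_mset (map_prod (Ab n) (AA n)) (image_mset rassoc LW) = image_mset rassoc (image_mset (map_prod (AA n) (Ab n)) LW)"
    by (simp add: image_mset.compositionality comp_def rassoc_def AA_def Ab_def)
  finally have R: "tens_map basis_vec (WC :: _ \<Rightarrow> (_ \<Rightarrow>\<^sub>0 'k::field)) (WC d) = vec (image_mset rassoc (image_mset (map_prod (AA n) (Ab n)) LW))" .
  have "rassoc ((a, b), c) = (a, (b, c))" by (simp add: rassoc_def)
  then show ?thesis
    unfolding L R lookup_vec by (metis count_image_inj[OF inj_rassoc])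
qed

lemma sum_mset_if_filter: "sum_mset (image_mset (\<lambda>x. if P x then f x else 0) M) = sum_mset (image_mset f (filter_mset P M))"
  by (induction M) auto

lemma counit_basis:
  "lin_ext (\<lambda>(a, b). vsmult (WE a) (basis_vec b)) (WC d :: _ \<Rightarrow>\<^sub>0 'k::field) = basis_vec d"
  "lin_ext (\<lambda>(a, b). vsmult (WE b) (basis_vec a)) (WC d :: _ \<Rightarrow>\<^sub>0 'k::field) = basis_vec d"
proof -
  obtain w n where d: "d = Abs_wb (w, n)" "valid n w" by (rule wb_cases)
  have "lin_ext (\<lambda>(a, b). vsmult (WE a) (basis_vec b)) (WC d :: _ \<Rightarrow>\<^sub>0 'k::field)
      = sum_mset (image_mset (\<lambda>P. if fst P = [] then basis_vec (Ab n (snd P)) else 0) (dec w))"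
    unfolding d(1) cb_Abs[OF d(2)] lin_ext_vec image_mset.compositionality
    by (rule sum_mset_cong) (auto simp: AA_def Ab_def eb_Abs dest: valid_dec[OF d(2)])
  also have "\<dots> = basis_vec d"
    unfolding sum_mset_if_filter dec_filter_fst by (simp add: d Ab_def)
  finally show "lin_ext (\<lambda>(a, b). vsmult (WE a) (basis_vec b)) (WC d :: _ \<Rightarrow>\<^sub>0 'k::field) = basis_vec d" .
  have "lin_ext (\<lambda>(a, b). vsmult (WE b) (basis_vec a)) (WC d :: _ \<Rightarrow>\<^sub>0 'k::field)
      = sum_mset (image_mset (\<lambda>P. if snd P = [] then basis_vec (Ab n (fst P)) else 0) (dec w))"
    unfolding d(1) cb_Abs[OF d(2)] lin_ext_vec image_mset.compositionality
    by (rule sum_mset_cong) (auto simp: AA_def Ab_def eb_Abs dest: valid_dec[OF d(2)])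
  also have "\<dots> = basis_vec d"
    unfolding sum_mset_if_filter dec_filter_snd by (simp add: d Ab_def)
  finally show "lin_ext (\<lambda>(a, b). vsmult (WE b) (basis_vec a)) (WC d :: _ \<Rightarrow>\<^sub>0 'k::field) = basis_vec d" .
qed

lemma counit_mult_basis: "lin_fun WE (WM a b :: _ \<Rightarrow>\<^sub>0 'k::field) = (WE a * WE b :: 'k)"
proof -
  obtain v m where a: "a = Abs_wb (v, m)" "valid m v" by (rule wb_cases)
  obtain w n where b: "b = Abs_wb (w, n)" "valid n w" by (rule wb_cases)
  have "lin_fun WE (WM a b :: _ \<Rightarrow>\<^sub>0 'k::field) = sum_mset (image_mset (\<lambda>s. if s = [] then 1 else 0) (sh v (word_up w m)))"
    unfolding a(1) b(1) mb_Abs[OF a(2) b(2)] lin_fun_vec image_mset.compositionality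
    by (rule sum_mset_cong) (auto simp: Ab_def eb_Abs dest: valid_sh[OF a(2) b(2)])
  also have "\<dots> = (if v = [] \<and> w = [] then 1 else 0)"
  proof (cases "v = [] \<and> w = []")
    case True then show ?thesis by simp
  next
    case False
    have "sum_mset (image_mset (\<lambda>s. if s = [] then 1 else 0) (sh v (word_up w m))) = sum_mset (image_mset (\<lambda>s. 0::'k) (sh v (word_up w m)))"
      by (rule sum_mset_cong) (use False in \<open>auto dest!: sh_length\<close>)
    then show ?thesis using False by simp
  qed
  finally show ?thesis by (simp add: a b eb_Abs)
qed


lemma lin_id: "lin (\<lambda>x. x)"
  by (simp add: lin_def)

lemma slin_lookup: "lin f \<Longrightarrow> slin (\<lambda>x. Poly_Mapping.lookup (f x) k)"
  by (simp add: lin_def slin_def lookup_add)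

lemma slin_comp: "slin \<phi> \<Longrightarrow> lin f \<Longrightarrow> slin (\<lambda>x. \<phi> (f x))"
  by (simp add: lin_def slin_def)

lemma slin_mult_right: "slin \<phi> \<Longrightarrow> slin (\<lambda>x. \<phi> x * c)"
  by (simp add: slin_def algebra_simps)

lemma slin_mult_left: "slin \<phi> \<Longrightarrow> slin (\<lambda>x. c * \<phi> x)"
  by (simp add: slin_def algebra_simps)

lemma W_unit_e0: "W_unit = basis_vec e0"
  by (simp add: W_unit_eq e0_def)

lemma W_assoc: "mult WM (mult WM x y) z = (mult WM x (mult WM y z) :: wbasis \<Rightarrow>\<^sub>0 'k::field)"
proof -
  have A3: "mult WM (mult WM (basis_vec a) (basis_vec b)) (basis_vec c) = (mult WM (basis_vec a) (mult WM (basis_vec b) (basis_vec c)) :: wbasis \<Rightarrow>\<^sub>0 'k)" for a b c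
    by (simp add: assoc_basis)
  have A2: "mult WM (mult WM (basis_vec a) (basis_vec b)) z' = (mult WM (basis_vec a) (mult WM (basis_vec b) z') :: wbasis \<Rightarrow>\<^sub>0 'k)" for a b z'
    by (rule lin_eq[where x=z', OF lin_mult2 lin_comp[OF lin_mult2 lin_mult2]]) (rule A3)
  have A1: "mult WM (mult WM (basis_vec a) y') z' = (mult WM (basis_vec a) (mult WM y' z') :: wbasis \<Rightarrow>\<^sub>0 'k)" for a y' z'
    by (rule lin_eq[where x=y', OF lin_comp[OF lin_mult1 lin_mult2] lin_comp[OF lin_mult2 lin_mult1]]) (rule A2)
  show ?thesis
    by (rule lin_eq[where x=x, OF lin_comp[OF lin_mult1 lin_mult1] lin_mult1]) (rule A1)
qed

lemma W_unit_left: "mult WM W_unit x = (x :: wbasis \<Rightarrow>\<^sub>0 'k::field)"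
  unfolding W_unit_e0
  by (rule lin_eq[where x=x, OF lin_mult2 lin_id]) (simp add: unit_basis)

lemma W_unit_right: "mult WM x W_unit = (x :: wbasis \<Rightarrow>\<^sub>0 'k::field)"
  unfolding W_unit_e0
  by (rule lin_eq[where x=x, OF lin_mult1 lin_id]) (simp add: unit_basis)

lemma W_coassoc:
  "Poly_Mapping.lookup (tens_map (WC :: _ \<Rightarrow> (_ \<Rightarrow>\<^sub>0 'k::field)) basis_vec (lin_ext WC x)) ((a, b), c)
   = Poly_Mapping.lookup (tens_map basis_vec (WC :: _ \<Rightarrow> (_ \<Rightarrow>\<^sub>0 'k::field)) (lin_ext WC x)) (a, (b, c))"
  unfolding tens_map_def
  by (rule slin_eq[where x=x, OF slin_lookup[OF lin_comp[OF lin_lin_ext lin_lin_ext]] slin_lookup[OF lin_comp[OF lin_lin_ext lin_lin_ext]]])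
     (simp add: coassoc_basis[unfolded tens_map_def])

lemma W_counit:
  "lin_ext (\<lambda>(a, b). vsmult (WE a) (basis_vec b)) (lin_ext WC x) = (x :: wbasis \<Rightarrow>\<^sub>0 'k::field)"
  "lin_ext (\<lambda>(a, b). vsmult (WE b) (basis_vec a)) (lin_ext WC x) = (x :: wbasis \<Rightarrow>\<^sub>0 'k::field)"
  by (rule lin_eq[where x=x, OF lin_comp[OF lin_lin_ext lin_lin_ext] lin_id], simp add: counit_basis)+

lemma W_coprod_mult:
  "lin_ext WC (mult WM x y) = (mult (tens_prod_basis WM) (lin_ext WC x) (lin_ext WC y) :: (wbasis \<times> wbasis) \<Rightarrow>\<^sub>0 'k::field)"
proof -
  have B2: "lin_ext WC (mult WM (basis_vec a) y') = (mult (tens_prod_basis WM) (lin_ext WC (basis_vec a)) (lin_ext WC y') :: (wbasis \<times> wbasis) \<Rightarrow>\<^sub>0 'k)" for a y'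
    by (rule lin_eq[where x=y', OF lin_comp[OF lin_lin_ext lin_mult2] lin_comp[OF lin_mult2 lin_lin_ext]])
       (simp add: coprod_basis)
  show ?thesis
    by (rule lin_eq[where x=x, OF lin_comp[OF lin_lin_ext lin_mult1] lin_comp[OF lin_mult1 lin_lin_ext]])
       (rule B2)
qed

lemma W_coprod_unit: "lin_ext WC W_unit = (tens W_unit W_unit :: (wbasis \<times> wbasis) \<Rightarrow>\<^sub>0 'k::field)"
  unfolding W_unit_e0 by (simp add: tens_basis e0_def cb_Abs AA_def)

lemma W_counit_mult: "lin_fun WE (mult WM x y :: wbasis \<Rightarrow>\<^sub>0 'k::field) = lin_fun WE x * lin_fun WE y"
proof -
  have C2: "lin_fun WE (mult WM (basis_vec a) y' :: wbasis \<Rightarrow>\<^sub>0 'k::field) = lin_fun WE (basis_vec a) * lin_fun WE y'" for a y'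
    by (rule slin_eq[where x=y', OF slin_comp[OF slin_lin_fun lin_mult2] slin_mult_left[OF slin_lin_fun]])
       (simp add: counit_mult_basis)
  show ?thesis
    by (rule slin_eq[where x=x, OF slin_comp[OF slin_lin_fun lin_mult1] slin_mult_right[OF slin_lin_fun]])
       (rule C2)
qed

lemma W_counit_unit: "lin_fun WE W_unit = (1 :: 'k::field)"
  unfolding W_unit_e0 by (simp add: e0_def eb_Abs)

lemma W_bialgebra: "bialgebra (WM :: _ \<Rightarrow> _ \<Rightarrow> (_ \<Rightarrow>\<^sub>0 'k::field)) W_unit WC WE"
  unfolding bialgebra_def
  by (intro conjI allI W_assoc W_unit_left W_unit_right W_coassoc W_counit W_coprod_mult
        W_coprod_unit W_counit_mult W_counit_unit)

lemma W_deg_Abs: "valid n w \<Longrightarrow> W_deg (Abs_wb (w, n)) = length w"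
  by (simp add: W_deg_def rep_Abs)

lemma keys_WM:
  assumes "c \<in> Poly_Mapping.keys (WM a b :: _ \<Rightarrow>\<^sub>0 'k::field)"
  shows "W_deg c = W_deg a + W_deg b \<and> snd (rep_wb c) = snd (rep_wb a) + snd (rep_wb b)"
proof -
  obtain v m where a: "a = Abs_wb (v, m)" "valid m v" by (rule wb_cases)
  obtain w n where b: "b = Abs_wb (w, n)" "valid n w" by (rule wb_cases)
  have "c \<in># image_mset (Ab (m + n)) (sh v (word_up w m))"
    using assms keys_vec by (fastforce simp: a b mb_Abs)
  then obtain s where s: "s \<in># sh v (word_up w m)" "c = Abs_wb (s, m + n)" by (auto simp: Ab_def)
  have vs: "valid (m + n) s" using valid_sh[OF a(2) b(2) s(1)] .
  show ?thesis
    using s vs sh_length[OF s(1)] by (simp add: a b W_deg_Abs rep_Abs)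
qed

lemma W_graded: "graded_bialgebra W_deg (WM :: _ \<Rightarrow> _ \<Rightarrow> (_ \<Rightarrow>\<^sub>0 'k::field)) W_unit WC WE"
  unfolding graded_bialgebra_def
proof (intro conjI allI ballI impI)
  show "bialgebra (WM :: _ \<Rightarrow> _ \<Rightarrow> (_ \<Rightarrow>\<^sub>0 'k::field)) W_unit WC WE" by (rule W_bialgebra)
next
  fix a b c assume "c \<in> Poly_Mapping.keys (WM a b :: _ \<Rightarrow>\<^sub>0 'k::field)"
  then show "W_deg c = W_deg a + W_deg b" using keys_WM by blast
next
  fix c assume "c \<in> Poly_Mapping.keys (W_unit :: _ \<Rightarrow>\<^sub>0 'k::field)"
  then show "W_deg c = 0" by (simp add: W_unit_def W_deg_Abs)
next
  fix a :: wbasis and x assume x: "x \<in> Poly_Mapping.keys (WC a :: _ \<Rightarrow>\<^sub>0 'k::field)"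
  obtain w n where a: "a = Abs_wb (w, n)" "valid n w" by (rule wb_cases)
  have "x \<in># image_mset (AA n) (dec w)"
    using x keys_vec by (fastforce simp: a cb_Abs)
  then obtain P where P: "P \<in># dec w" "x = AA n P" by auto
  have vP: "valid n (fst P)" "valid n (snd P)" using valid_dec[OF a(2) P(1)] by auto
  have "length (fst P) + length (snd P) = length w"
    using dec_append[OF P(1)] by (metis length_append)
  then show "case x of (p, q) \<Rightarrow> W_deg p + W_deg q = W_deg a"
    by (simp add: P(2) AA_def W_deg_Abs vP a)
next
  fix a :: wbasis assume "(WE a :: 'k) \<noteq> 0"
  then show "W_deg a = 0" by (simp add: W_counit_basis_def W_deg_def split: if_splits)
qed

lemma W_not_hopf: "\<not> hopf_algebra (WM :: _ \<Rightarrow> _ \<Rightarrow> (_ \<Rightarrow>\<^sub>0 'k::field)) W_unit WC WE"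
proof
  assume "hopf_algebra (WM :: _ \<Rightarrow> _ \<Rightarrow> (_ \<Rightarrow>\<^sub>0 'k::field)) W_unit WC WE"
  then obtain S :: "wbasis \<Rightarrow> (wbasis \<Rightarrow>\<^sub>0 'k)" where
    S: "\<And>x. mult_lin WM (tens_map S basis_vec (lin_ext WC x)) = vsmult (lin_fun WE x) (W_unit :: _ \<Rightarrow>\<^sub>0 'k)"
    unfolding hopf_algebra_def by blast
  define g where "g = Abs_wb ([], 1)"
  have WCg: "lin_ext WC (basis_vec g) = (basis_vec (g, g) :: _ \<Rightarrow>\<^sub>0 'k)"
    by (simp add: g_def cb_Abs AA_def)
  have "mult_lin WM (tens_map S basis_vec (lin_ext WC (basis_vec g))) = mult WM (S g) (basis_vec g)"
    unfolding WCg tens_map_def by (simp add: mult_def)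
  also have "\<dots> = lin_ext (\<lambda>b. WM b g) (S g)"
    by (subst lin_principle[OF lin_mult1]) simp
  finally have "lin_ext (\<lambda>b. WM b g) (S g) = vsmult (lin_fun WE (basis_vec g)) (W_unit :: _ \<Rightarrow>\<^sub>0 'k)"
    using S by metis
  also have "\<dots> = basis_vec e0"
    by (simp add: g_def eb_Abs W_unit_e0)
  finally have eq: "lin_ext (\<lambda>b. WM b g) (S g) = (basis_vec e0 :: _ \<Rightarrow>\<^sub>0 'k)" .
  have "Poly_Mapping.lookup (WM b g :: _ \<Rightarrow>\<^sub>0 'k) e0 = 0" for b
  proof (rule ccontr)
    assume "Poly_Mapping.lookup (WM b g :: _ \<Rightarrow>\<^sub>0 'k) e0 \<noteq> 0"
    then have "e0 \<in> Poly_Mapping.keys (WM b g :: _ \<Rightarrow>\<^sub>0 'k)" by (simp add: in_keys_iff)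
    then have "snd (rep_wb e0) = snd (rep_wb b) + snd (rep_wb g)" using keys_WM by blast
    then show False by (simp add: e0_def g_def rep_Abs)
  qed
  then have "Poly_Mapping.lookup (lin_ext (\<lambda>b. WM b g) (S g)) e0 = 0"
    by (simp add: lookup_lin_ext)
  then show False using eq by (simp add: lookup_basis_vec)
qed

theorem theorem3p5:
  shows "graded_bialgebra W_deg (W_mult_basis :: wbasis \<Rightarrow> wbasis \<Rightarrow> (wbasis \<Rightarrow>\<^sub>0 'k::field))
            W_unit W_coprod_basis W_counit_basis
       \<and> \<not> hopf_algebra (W_mult_basis :: wbasis \<Rightarrow> wbasis \<Rightarrow> (wbasis \<Rightarrow>\<^sub>0 'k::field))
            W_unit W_coprod_basis W_counit_basis"
  using W_graded W_not_hopf by blast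

end
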